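(* Let $m\neq n$ be positive integers and let $g,h$ be homeomorphisms of $\mathbb{R}$ satisfying $gh^mg^{-1}=h^n$. If $h$ has no fixed point, then $g$ has a fixed point. *)

theory Defs
  imports "HOL-Analysis.Analysis"
begin

end

theory Submission
  imports Defs
begin

lemma orbit_unbounded:
  fixes h :: "real \<Rightarrow> real"
  assumes c: "continuous_on UNIV h" and up: "\<forall>x. x < h x"
  shows "\<exists>k. b < (h ^^ k) a"
proof (rule ccontr)
  assume "\<not> ?thesis"
  hence bd: "\<forall>k. (h ^^ k) a \<le> b" by (simp add: not_less)
  define s where "s = (\<lambda>k. (h ^^ k) a)"
  have inc: "incseq s" unfolding s_def
    by (rule incseq_SucI) (simp add: less_imp_le up)
  obtain L where L: "s \<longlonglongrightarrow> L" using incseq_convergent[OF inc, of b] bd unfolding s_def by blast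
  have "(\<lambda>k. s (Suc k)) \<longlonglongrightarrow> L" using L by (rule LIMSEQ_Suc)
  moreover have "(\<lambda>k. s (Suc k)) = (\<lambda>k. h (s k))" by (simp add: s_def)
  moreover have "(\<lambda>k. h (s k)) \<longlonglongrightarrow> h L"
    using c L by (metis UNIV_I continuous_on_eq_continuous_at isCont_tendsto_compose open_UNIV)
  ultimately have "h L = L" using LIMSEQ_unique by metis
  thus False using up by (metis less_irrefl)
qed

lemma up_strict_mono:
  fixes h :: "real \<Rightarrow> real"
  assumes c: "continuous_on UNIV h" and i: "inj h" and up: "\<forall>x. x < h x"
  shows "strict_mono h"
proof (rule strict_monoI)
  fix a b :: real assume ab: "a < b"
  define c where "c = max (h a) b + 1"
  have bc: "b < c" and hac: "h a < c" unfolding c_def by auto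
  have "(h a < h b \<and> h b < h c) \<or> (h c < h b \<and> h b < h a)"
    by (rule continuous_inj_imp_mono[OF ab bc]) (use c i in \<open>auto intro: continuous_on_subset inj_on_subset\<close>)
  moreover have "h c > c" using up by auto
  ultimately show "h a < h b" using hac by linarith
qed

lemma funpow_strict_mono:
  fixes h :: "real \<Rightarrow> real"
  assumes "strict_mono h" shows "strict_mono (h ^^ k)"
  by (induction k) (auto simp: strict_mono_def assms[unfolded strict_mono_def])

lemma funpow_up:
  fixes h :: "real \<Rightarrow> real"
  assumes up: "\<forall>x. x < h x" and "k > 0" shows "x < (h ^^ k) x"
  using assms(2)
proof (induction k)
  case 0 then show ?case by simp
next
  case (Suc k)
  show ?case
  proof (cases "k = 0")
    case True then show ?thesis using up by simp
  next
    case False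
    then have "x < (h ^^ k) x" using Suc by simp
    also have "\<dots> < h ((h ^^ k) x)" using up by simp
    finally show ?thesis by simp
  qed
qed

lemma funpow_cont:
  fixes h :: "real \<Rightarrow> real"
  assumes "continuous_on UNIV h" shows "continuous_on UNIV (h ^^ k)"
  by (induction k) (auto intro: continuous_on_compose2[OF assms] simp: continuous_on_id)

lemma comm_iter:
  fixes g h :: "real \<Rightarrow> real"
  assumes r: "\<forall>x. g ((h ^^ m) x) = (h ^^ n) (g x)"
  shows "g ((h ^^ (m * k)) x) = (h ^^ (n * k)) (g x)"
proof (induction k arbitrary: x)
  case 0 then show ?case by simp
next
  case (Suc k)
  have "g ((h ^^ (m * Suc k)) x) = g ((h ^^ m) ((h ^^ (m * k)) x))"
    by (simp add: funpow_add)
  also have "\<dots> = (h ^^ n) (g ((h ^^ (m * k)) x))" using r by simp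
  also have "\<dots> = (h ^^ n) ((h ^^ (n * k)) (g x))" using Suc by simp
  also have "\<dots> = (h ^^ (n * Suc k)) (g x)" by (simp add: funpow_add)
  finally show ?case .
qed

lemma core:
  fixes g h :: "real \<Rightarrow> real"
  assumes c: "continuous_on UNIV h" and i: "inj h" and up: "\<forall>x. x < h x"
    and r: "\<forall>x. g ((h ^^ m) x) = (h ^^ n) (g x)" and mn: "m < n"
  shows "\<exists>y. y < g y"
proof -
  define H where "H = h ^^ (n - m)"
  have Hc: "continuous_on UNIV H" unfolding H_def by (rule funpow_cont[OF c])
  have Hup: "\<forall>x. x < H x" unfolding H_def using funpow_up[OF up] mn by simp
  obtain k where k: "0 < (H ^^ k) (g 0)" using orbit_unbounded[OF Hc Hup] by blast
  have HK: "(H ^^ k) = h ^^ ((n - m) * k)" unfolding H_def by (simp add: funpow_mult)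
  define y where "y = (h ^^ (m * k)) 0"
  have "g y = (h ^^ (n * k)) (g 0)" unfolding y_def by (rule comm_iter[OF r])
  also have "\<dots> = (h ^^ (m * k)) ((h ^^ ((n - m) * k)) (g 0))"
  proof -
    have "n * k = m * k + (n - m) * k" using mn by (simp add: diff_mult_distrib)
    thus ?thesis by (metis comp_apply funpow_add)
  qed
  also have "\<dots> > y" unfolding y_def
    using funpow_strict_mono[OF up_strict_mono[OF c i up], of "m * k"] k HK
    by (simp add: strict_mono_def)
  finally show ?thesis by blast
qed


lemma ivt_fix:
  fixes f :: "real \<Rightarrow> real"
  assumes c: "continuous_on UNIV f" and a: "a < f a" and b: "f b < b"
  shows "\<exists>x. f x = x"
proof -
  define d where "d = (\<lambda>x. f x - x)"
  have dc: "continuous_on S d" for S unfolding d_def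
    by (intro continuous_intros continuous_on_subset[OF c]) auto
  have da: "d a \<ge> 0" and db: "d b \<le> 0" using a b unfolding d_def by auto
  have "\<exists>x. d x = 0"
  proof (cases "a \<le> b")
    case True then show ?thesis using IVT2'[of d b 0 a, OF db da True dc] by blast
  next
    case False then show ?thesis using IVT'[of d b 0 a, OF db da _ dc] by auto
  qed
  then show ?thesis unfolding d_def by auto
qed

lemma iter_inv:
  fixes h h' :: "real \<Rightarrow> real"
  assumes "\<forall>x. h (h' x) = x" shows "(h ^^ k) ((h' ^^ k) x) = x"
proof (induction k arbitrary: x)
  case 0 then show ?case by simp
next
  case (Suc k)
  have e1: "(h' ^^ Suc k) x = h' ((h' ^^ k) x)" by simp
  have e2: "(h ^^ Suc k) y = (h ^^ k) (h y)" for y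
    by (metis comp_apply funpow_Suc_right)
  have "(h ^^ Suc k) ((h' ^^ Suc k) x) = (h ^^ k) (h (h' ((h' ^^ k) x)))"
    by (simp only: e1 e2)
  also have "\<dots> = x" using assms Suc by simp
  finally show ?case .
qed

lemma inv_rel:
  fixes g h h' :: "real \<Rightarrow> real"
  assumes i1: "\<forall>x. h (h' x) = x" and i2: "\<forall>x. h' (h x) = x"
    and r: "\<forall>x. g ((h ^^ m) x) = (h ^^ n) (g x)"
  shows "g ((h' ^^ m) x) = (h' ^^ n) (g x)"
proof -
  have "(h' ^^ n) (g x) = (h' ^^ n) (g ((h ^^ m) ((h' ^^ m) x)))"
    using iter_inv[where h=h and h'=h', OF i1] by simp
  also have "\<dots> = (h' ^^ n) ((h ^^ n) (g ((h' ^^ m) x)))" using r by simp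
  also have "\<dots> = g ((h' ^^ m) x)" using iter_inv[where h=h' and h'=h, OF i2] by simp
  finally show ?thesis by simp
qed

lemma ginv_rel:
  fixes g g' h :: "real \<Rightarrow> real"
  assumes i1: "\<forall>x. g (g' x) = x" and i2: "\<forall>x. g' (g x) = x"
    and r: "\<forall>x. g ((h ^^ m) x) = (h ^^ n) (g x)"
  shows "g' ((h ^^ n) x) = (h ^^ m) (g' x)"
proof -
  have "g' ((h ^^ n) x) = g' ((h ^^ n) (g (g' x)))" using i1 by simp
  also have "\<dots> = g' (g ((h ^^ m) (g' x)))" using r by simp
  also have "\<dots> = (h ^^ m) (g' x)" using i2 by simp
  finally show ?thesis .
qed

lemma neg_iter:
  fixes f :: "real \<Rightarrow> real"
  shows "((\<lambda>x. - f (- x)) ^^ k) x = - (f ^^ k) (- x)"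
  by (induction k arbitrary: x) auto

lemma neg_rel:
  fixes g h :: "real \<Rightarrow> real"
  assumes r: "\<forall>x. g ((h ^^ m) x) = (h ^^ n) (g x)"
  shows "\<forall>x. (\<lambda>x. - g (- x)) (((\<lambda>x. - h (- x)) ^^ m) x) = ((\<lambda>x. - h (- x)) ^^ n) ((\<lambda>x. - g (- x)) x)"
  using r by (simp add: neg_iter)

lemma neg_cont:
  fixes h :: "real \<Rightarrow> real"
  assumes "continuous_on UNIV h" shows "continuous_on UNIV (\<lambda>x. - h (- x))"
  by (intro continuous_intros continuous_on_compose2[OF assms]) auto

lemma neg_inj:
  fixes h h' :: "real \<Rightarrow> real"
  assumes "\<forall>x. h' (h x) = x" shows "inj (\<lambda>x. - h (- x))"
  by (rule injI) (metis assms minus_equation_iff)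

lemma L4:
  fixes g g' h h' :: "real \<Rightarrow> real"
  assumes hc: "continuous_on UNIV h" and h'c: "continuous_on UNIV h'"
    and h1: "\<forall>x. h (h' x) = x" and h2: "\<forall>x. h' (h x) = x"
    and g1: "\<forall>x. g (g' x) = x" and g2: "\<forall>x. g' (g x) = x"
    and up: "\<forall>x. x < h x"
    and r: "\<forall>x. g ((h ^^ m) x) = (h ^^ n) (g x)" and mn: "m \<noteq> n"
  shows "\<exists>y z. y < g y \<and> g z < z"
proof -
  have ih: "inj h" by (rule injI) (metis h2)
  have nup: "\<forall>x. x < (\<lambda>x. - h' (- x)) x"
  proof
    fix x :: real
    have "h (h' (- x)) = - x" using h1 by simp
    moreover have "h' (- x) < h (h' (- x))" using up by simp
    ultimately show "x < (\<lambda>x. - h' (- x)) x" by simp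
  qed
  have nc: "continuous_on UNIV (\<lambda>x. - h' (- x))" by (rule neg_cont[OF h'c])
  have ni: "inj (\<lambda>x. - h' (- x))" by (rule neg_inj[where h=h' and h'=h, OF h1])
  have rh: "\<forall>x. g ((h' ^^ m) x) = (h' ^^ n) (g x)" using inv_rel[OF h1 h2 r] by blast
  have r': "\<forall>x. g' ((h ^^ n) x) = (h ^^ m) (g' x)" using ginv_rel[OF g1 g2 r] by blast
  have rh': "\<forall>x. g' ((h' ^^ n) x) = (h' ^^ m) (g' x)" using inv_rel[OF h1 h2 r'] by blast
  show ?thesis
  proof (cases "m < n")
    case True
    obtain y where y: "y < g y" using core[OF hc ih up r True] by blast
    obtain z where z: "z < - g (- z)" using core[OF nc ni nup neg_rel[OF rh] True] by auto
    have "g (- z) < - z" using z by linarith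
    then show ?thesis using y by blast
  next
    case False
    then have nm: "n < m" using mn by simp
    obtain y where y: "y < g' y" using core[OF hc ih up r' nm] by blast
    have a: "g (g' y) < g' y" using y g1 by simp
    obtain z where z: "z < - g' (- z)" using core[OF nc ni nup neg_rel[OF rh'] nm] by auto
    have "g' (- z) < g (g' (- z))" using z g1 by simp
    then show ?thesis using a by blast
  qed
qed

theorem lemma5p6:
  fixes g g' h h' :: "real \<Rightarrow> real" and m n :: nat
  assumes "m > 0" and "n > 0" and "m \<noteq> n"
    and "homeomorphism UNIV UNIV g g'"
    and "homeomorphism UNIV UNIV h h'"
    and "g \<circ> (h ^^ m) \<circ> g' = h ^^ n"
    and "\<forall>x. h x \<noteq> x"
  shows "\<exists>x. g x = x"
proof -
  from assms(4) have gc: "continuous_on UNIV g" and g1: "\<forall>x. g (g' x) = x" and g2: "\<forall>x. g' (g x) = x"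
    unfolding homeomorphism_def by auto
  from assms(5) have hc: "continuous_on UNIV h" and h'c: "continuous_on UNIV h'"
    and h1: "\<forall>x. h (h' x) = x" and h2: "\<forall>x. h' (h x) = x"
    unfolding homeomorphism_def by auto
  have r: "\<forall>x. g ((h ^^ m) x) = (h ^^ n) (g x)"
  proof
    fix x
    have "g ((h ^^ m) x) = g ((h ^^ m) (g' (g x)))" using g2 by simp
    also have "\<dots> = (g \<circ> (h ^^ m) \<circ> g') (g x)" by simp
    also have "\<dots> = (h ^^ n) (g x)" using assms(6) by simp
    finally show "g ((h ^^ m) x) = (h ^^ n) (g x)" .
  qed
  have sign: "(\<forall>x. x < h x) \<or> (\<forall>x. h x < x)"
  proof (rule ccontr)
    assume "\<not> ?thesis"
    then obtain a b where "\<not> a < h a" "\<not> h b < b" by auto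
    then have "h a < a" "b < h b" using assms(7) by (metis linorder_neqE_linordered_idom)+
    then show False using ivt_fix[OF hc] assms(7) by blast
  qed
  have "\<exists>y z. y < g y \<and> g z < z"
  proof (cases "\<forall>x. x < h x")
    case True
    then show ?thesis using L4[OF hc h'c h1 h2 g1 g2 True r assms(3)] by blast
  next
    case False
    then have dn: "\<forall>x. h x < x" using sign by blast
    have up': "\<forall>x. x < h' x"
    proof
      fix x
      have "h (h' x) < h' x" using dn by simp
      then show "x < h' x" using h1 by simp
    qed
    have rh: "\<forall>x. g ((h' ^^ m) x) = (h' ^^ n) (g x)" using inv_rel[OF h1 h2 r] by blast
    show ?thesis using L4[OF h'c hc h2 h1 g1 g2 up' rh assms(3)] by blast
  qed
  then show ?thesis using ivt_fix[OF gc] by blast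
qed

end
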